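(* Let $s_j=\sigma_j+it_j\in\mathbb{C}$ ($j=1,2,3$) with $\sigma_1+\sigma_3>1$ and $\sigma_1+\sigma_2+\sigma_3>2$, where $s_1,s_2$ and $\sigma_3$ are fixed and $t_3$ varies. Then $$\int_2^T \left|\zeta_{AV,2}(s_1,s_2,s_3)\right|^2\,dt_3=\zeta_{AV,2}^{[2]}(s_1,s_2,2\sigma_3)\,T+O(1)\qquad (T\to\infty),$$ where the implied constant depends on $s_1,s_2$ and $\sigma_3$.
   Context: Write $s_j=\sigma_j+it_j$ with $\sigma_j,t_j\in\mathbb{R}$; complex powers $n^{s}=e^{s\log n}$ use the real logarithm of positive reals. The Apostol–Vu double zeta-function is $$\zeta_{AV,2}(s_1,s_2,s_3)=\sum_{m=1}^\infty\sum_{n<m}\frac{1}{m^{s_1}n^{s_2}(m+n)^{s_3}},$$ where $n$ runs over positive integers $n<m$; this series converges absolutely for $\sigma_1+\sigma_3>1$, $\sigma_1+\sigma_2+\sigma_3>2$, and $\zeta_{AV,2}$ extends meromorphically to $\mathbb{C}^3$ with singularities only on the hyperplanes $s_1+s_3=1-l$ and $s_1+s_2+s_3=2-l$ ($l\in\mathbb{Z}_{\ge0}$); $\zeta_{AV,2}$ denotes this continuation. Also define $$\zeta_{AV,2}^{[2]}(s_1,s_2,s_3)=\sum_{k=2}^\infty\left|\sum_{k/2<m\le k-1}\frac{1}{m^{s_1}(k-m)^{s_2}}\right|^2\frac{1}{k^{s_3}},$$ which converges absolutely when $2\sigma_1+\sigma_3>1$ and $2\sigma_1+2\sigma_2+\sigma_3>3$.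 *)

theory Defs
  imports "HOL-Analysis.Analysis" "HOL-Library.Landau_Symbols"
begin

text \<open>On the region of
  absolute convergence this coincides with the meromorphic continuation.\<close>
definition zeta_AV2 :: "complex \<Rightarrow> complex \<Rightarrow> complex \<Rightarrow> complex" where
  "zeta_AV2 s1 s2 s3 =
     infsum (\<lambda>(m::nat, n::nat). 1 / (of_nat m powr s1 * of_nat n powr s2 * of_nat (m + n) powr s3))
            {(m, n). 0 < n \<and> n < m}"

definition zeta_AV2_sq :: "complex \<Rightarrow> complex \<Rightarrow> complex \<Rightarrow> complex" where
  "zeta_AV2_sq s1 s2 s3 =
     infsum (\<lambda>k::nat.
        complex_of_real ((cmod (\<Sum>m\<in>{m::nat. real k / 2 < real m \<and> m \<le> k - 1}.
              1 / (of_nat m powr s1 * of_nat (k - m) powr s2)))^2) / of_nat k powr s3)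
       {2..}"

end

theory Submission
  imports Defs
begin


lemma sum_inj_le_suminf:
  fixes f :: "nat \<Rightarrow> real"
  assumes "summable f" "\<And>n. 0 \<le> f n" "finite X" "inj_on \<phi> X"
  shows "(\<Sum>x\<in>X. f (\<phi> x)) \<le> suminf f"
proof -
  have "(\<Sum>x\<in>X. f (\<phi> x)) = sum f (\<phi> ` X)"
    by (simp add: sum.reindex[OF assms(4)])
  also have "\<dots> \<le> suminf f"
    using assms by (intro sum_le_suminf) auto
  finally show ?thesis .
qed

locale AV =
  fixes s1 s2 :: complex and \<sigma>3 :: real
  assumes h1: "Re s1 + \<sigma>3 > 1" and h2: "Re s1 + Re s2 + \<sigma>3 > 2"
begin

definition S :: "nat \<Rightarrow> nat set" where
  "S k = {m::nat. real k / 2 < real m \<and> m \<le> k - 1}"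
definition A :: "nat \<Rightarrow> complex" where
  "A k = (\<Sum>m\<in>S k. 1 / (of_nat m powr s1 * of_nat (k - m) powr s2))"
definition P :: "nat \<Rightarrow> real" where
  "P k = (\<Sum>m\<in>S k. real m powr (- Re s1) * real (k - m) powr (- Re s2))"
definition \<beta> :: "nat \<Rightarrow> real" where
  "\<beta> k = P k * real k powr (- \<sigma>3)"

definition "D = min (Re s1 + \<sigma>3 - 1) (Re s1 + Re s2 + \<sigma>3 - 2)"
definition "\<gamma> = max 0 (1 - Re s2) + D / 2"
definition "\<delta> = Re s1 + \<sigma>3 - 1 - \<gamma>"
definition "Z = (\<Sum>j. real j powr (- (Re s2 + \<gamma>)))"
definition "C = 2 powr \<bar>Re s1\<bar> * Z"

lemma D_pos: "D > 0" using h1 h2 by (simp add: D_def)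
lemma \<gamma>_nonneg: "\<gamma> \<ge> 0" using D_pos by (simp add: \<gamma>_def)
lemma \<gamma>_big: "Re s2 + \<gamma> > 1" using D_pos by (auto simp: \<gamma>_def max_def)
lemma \<delta>_pos: "\<delta> > 0"
proof -
  have "max 0 (1 - Re s2) = 0 \<or> max 0 (1 - Re s2) = 1 - Re s2" by (simp add: max_def)
  moreover have "D \<le> Re s1 + \<sigma>3 - 1" "D \<le> Re s1 + Re s2 + \<sigma>3 - 2" by (simp_all add: D_def)
  moreover note D_pos
  ultimately show ?thesis unfolding \<delta>_def \<gamma>_def by linarith
qed

lemma S_finite: "finite (S k)"
  by (rule finite_subset[of _ "{..k}"]) (auto simp: S_def)

lemma S_mem: assumes "m \<in> S k" shows "1 \<le> m" "m < k" "1 \<le> k - m" "k < 2 * m" "m \<le> k"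
  using assms by (auto simp: S_def)

lemma S_small: "k \<le> 1 \<Longrightarrow> S k = {}"
  by (auto simp: S_def)

lemma Z_summable: "summable (\<lambda>j. real j powr (- (Re s2 + \<gamma>)))"
  using \<gamma>_big by (subst summable_real_powr_iff) auto

lemma Z_nonneg: "Z \<ge> 0"
  unfolding Z_def by (rule suminf_nonneg[OF Z_summable]) auto

lemma C_nonneg: "C \<ge> 0" using Z_nonneg by (simp add: C_def)

lemma P_nonneg: "P k \<ge> 0" unfolding P_def by (intro sum_nonneg) auto
lemma \<beta>_nonneg: "\<beta> k \<ge> 0" unfolding \<beta>_def using P_nonneg by simp

lemma m_pow_bound:
  assumes "m \<in> S k"
  shows "real m powr (- Re s1) \<le> 2 powr \<bar>Re s1\<bar> * real k powr (- Re s1)"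
proof -
  note S = S_mem[OF assms]
  have m0: "real m > 0" using S by simp
  show ?thesis
  proof (cases "Re s1 \<ge> 0")
    case True
    have "real m powr (- Re s1) \<le> (real k / 2) powr (- Re s1)"
      using True S m0 by (intro powr_mono2') auto
    also have "\<dots> = 2 powr Re s1 * real k powr (- Re s1)"
      by (simp add: powr_divide powr_minus divide_simps)
    finally show ?thesis using True by simp
  next
    case False
    have "real m powr (- Re s1) \<le> real k powr (- Re s1)"
      using False S m0 by (intro powr_mono2) auto
    also have "\<dots> \<le> 2 powr \<bar>Re s1\<bar> * real k powr (- Re s1)"
      using mult_right_mono[of 1 "2 powr \<bar>Re s1\<bar>" "real k powr (- Re s1)"] powr_mono[of 0 "\<bar>Re s1\<bar>" 2] by simp
    finally show ?thesis .
  qed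
qed


lemma km_pow_bound:
  assumes "m \<in> S k"
  shows "real (k - m) powr (- Re s2) \<le> real k powr \<gamma> * real (k - m) powr (- (Re s2 + \<gamma>))"
proof -
  note S = S_mem[OF assms]
  have pos: "real (k - m) > 0" using S by simp
  have "real (k - m) powr (- Re s2) = real (k - m) powr \<gamma> * real (k - m) powr (- (Re s2 + \<gamma>))"
    by (simp add: powr_add[symmetric])
  also have "\<dots> \<le> real k powr \<gamma> * real (k - m) powr (- (Re s2 + \<gamma>))"
    using S pos \<gamma>_nonneg by (intro mult_right_mono powr_mono2) auto
  finally show ?thesis .
qed

lemma P_bound: "P k \<le> 2 powr \<bar>Re s1\<bar> * real k powr (- Re s1) * real k powr \<gamma> * Z"
proof -
  have "P k \<le> (\<Sum>m\<in>S k. (2 powr \<bar>Re s1\<bar> * real k powr (- Re s1)) *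
                  (real k powr \<gamma> * real (k - m) powr (- (Re s2 + \<gamma>))))"
    unfolding P_def
    by (intro sum_mono mult_mono m_pow_bound km_pow_bound) auto
  also have "\<dots> = 2 powr \<bar>Re s1\<bar> * real k powr (- Re s1) * real k powr \<gamma> *
                  (\<Sum>m\<in>S k. real (k - m) powr (- (Re s2 + \<gamma>)))"
    by (simp add: sum_distrib_left mult_ac)
  also have "\<dots> \<le> 2 powr \<bar>Re s1\<bar> * real k powr (- Re s1) * real k powr \<gamma> * Z"
  proof (intro mult_left_mono)
    show "(\<Sum>m\<in>S k. real (k - m) powr (- (Re s2 + \<gamma>))) \<le> Z"
      unfolding Z_def
      using sum_inj_le_suminf[OF Z_summable _ S_finite, of "\<lambda>m. k - m" k]
      by (force simp: inj_on_def dest: S_mem)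
  qed auto
  finally show ?thesis .
qed

lemma \<beta>_bound: "\<beta> k \<le> C * real k powr (- 1 - \<delta>)"
proof (cases "k = 0")
  case True
  then show ?thesis by (simp add: \<beta>_def P_def S_small)
next
  case False
  have "\<beta> k \<le> (2 powr \<bar>Re s1\<bar> * real k powr (- Re s1) * real k powr \<gamma> * Z) * real k powr (- \<sigma>3)"
    unfolding \<beta>_def by (intro mult_right_mono P_bound) auto
  also have "\<dots> = C * (real k powr (- Re s1) * real k powr \<gamma> * real k powr (- \<sigma>3))"
    by (simp add: C_def mult_ac)
  also have "real k powr (- Re s1) * real k powr \<gamma> * real k powr (- \<sigma>3) = real k powr (- 1 - \<delta>)"
  proof -
    have e: "- Re s1 + \<gamma> + - \<sigma>3 = - 1 - \<delta>" by (simp add: \<delta>_def)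
    show ?thesis by (simp only: powr_add[symmetric] e)
  qed
  finally show ?thesis .
qed

lemma \<beta>_summable: "summable \<beta>"
proof (rule summable_comparison_test)
  show "\<exists>N. \<forall>n\<ge>N. norm (\<beta> n) \<le> C * real n powr (- 1 - \<delta>)"
    using \<beta>_bound \<beta>_nonneg by auto
  show "summable (\<lambda>n. C * real n powr (- 1 - \<delta>))"
    using \<delta>_pos by (intro summable_mult) (simp add: summable_real_powr_iff)
qed

lemma \<beta>_le_C: "\<beta> k \<le> C"
proof -
  have "real k powr (- 1 - \<delta>) \<le> 1"
  proof (cases "k = 0")
    case False
    then show ?thesis using \<delta>_pos powr_mono[of "-1-\<delta>" 0 "real k"] by auto
  qed simp
  then show ?thesis using \<beta>_bound[of k] C_nonneg mult_left_mono[of _ 1 C] by fastforce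
qed

lemma norm_A_le: "cmod (A k) \<le> P k"
  unfolding A_def P_def
proof (rule order.trans[OF norm_sum sum_mono])
  fix m assume m: "m \<in> S k"
  note S = S_mem[OF m]
  have "cmod (of_nat m powr s1) = real m powr Re s1"
    by (subst norm_powr_real_powr) auto
  moreover have "cmod (of_nat (k - m) powr s2) = real (k - m) powr Re s2"
    by (subst norm_powr_real_powr) auto
  ultimately show "cmod (1 / (of_nat m powr s1 * of_nat (k - m) powr s2))
      \<le> real m powr (- Re s1) * real (k - m) powr (- Re s2)"
    by (simp add: norm_divide norm_mult powr_minus divide_simps)
qed


lemma norm_inner: "m \<in> S k \<Longrightarrow> cmod (1 / (of_nat m powr s1 * of_nat (k - m) powr s2))
      = real m powr (- Re s1) * real (k - m) powr (- Re s2)"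
proof -
  assume m: "m \<in> S k"
  note S = S_mem[OF m]
  have "cmod (of_nat m powr s1) = real m powr Re s1"
    by (subst norm_powr_real_powr) auto
  moreover have "cmod (of_nat (k - m) powr s2) = real (k - m) powr Re s2"
    by (subst norm_powr_real_powr) auto
  ultimately show ?thesis
    by (simp add: norm_divide norm_mult powr_minus divide_simps)
qed

lemma norm_powr_nat: "cmod (of_nat k powr s) = real k powr Re s"
  by (subst norm_powr_real_powr) auto

lemma norm_term_le:
  assumes "Re s = \<sigma>3"
  shows "cmod (A k / of_nat k powr s) \<le> \<beta> k"
proof -
  have "cmod (A k / of_nat k powr s) = cmod (A k) * real k powr (- \<sigma>3)"
    by (simp add: norm_divide norm_powr_nat assms powr_minus divide_inverse norm_mult norm_inverse)
  also have "\<dots> \<le> P k * real k powr (- \<sigma>3)"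
    by (intro mult_right_mono norm_A_le) auto
  finally show ?thesis by (simp add: \<beta>_def)
qed

lemma zeta_sums:
  assumes "Re s = \<sigma>3"
  shows "(\<lambda>k. A k / of_nat k powr s) sums zeta_AV2 s1 s2 s"
proof -
  define g where "g = (\<lambda>(m::nat, n::nat). 1 / (of_nat m powr s1 * of_nat n powr s2 * of_nat (m + n) powr s))"
  define PP where "PP = {(m::nat, n::nat). 0 < n \<and> n < m}"
  define h where "h = (\<lambda>(k::nat, m::nat). (m, k - m))"
  define SG where "SG = Sigma (UNIV::nat set) S"
  define fc where "fc = (\<lambda>k m. 1 / (of_nat m powr s1 * of_nat (k - m) powr s2) / of_nat k powr s)"
  have inj: "inj_on h SG"
    unfolding inj_on_def h_def SG_def by (force dest: S_mem)
  have img: "h ` SG = PP"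
  proof
    show "h ` SG \<subseteq> PP" unfolding h_def SG_def PP_def by (force dest: S_mem)
    show "PP \<subseteq> h ` SG"
    proof
      fix x assume "x \<in> PP"
      then obtain m n where x: "x = (m, n)" "0 < n" "n < m" unfolding PP_def by auto
      have "(m + n, m) \<in> SG" using x by (auto simp: SG_def S_def)
      moreover have "h (m + n, m) = x" using x by (simp add: h_def)
      ultimately show "x \<in> h ` SG" by force
    qed
  qed
  have gh: "(g \<circ> h) x = (\<lambda>(k, m). fc k m) x" if "x \<in> SG" for x
  proof -
    obtain k m where x: "x = (k, m)" "m \<in> S k" using \<open>x \<in> SG\<close> by (auto simp: SG_def)
    have "m + (k - m) = k" using S_mem[OF x(2)] by simp
    then show ?thesis using x by (simp add: g_def h_def fc_def divide_simps)
  qed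
  have normfc: "norm (fc k m) = real m powr (- Re s1) * real (k - m) powr (- Re s2) * real k powr (- \<sigma>3)"
    if "m \<in> S k" for k m
    using norm_inner[OF that]
    by (simp add: fc_def norm_divide norm_powr_nat assms powr_minus divide_inverse norm_mult norm_inverse)
  have nsum: "(\<lambda>x. norm ((\<lambda>(k, m). fc k m) x)) summable_on SG"
    unfolding SG_def
  proof (rule summable_on_SigmaI[where g = \<beta>])
    fix k :: nat
    have "(\<Sum>m\<in>S k. norm (fc k m)) = \<beta> k"
      by (simp add: normfc \<beta>_def P_def sum_distrib_right cong: sum.cong)
    then show "((\<lambda>m. norm ((\<lambda>(k, m). fc k m) (k, m))) has_sum \<beta> k) (S k)"
      using S_finite[of k] by (simp add: has_sum_finiteI)
  next
    show "\<beta> summable_on UNIV"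
      using \<beta>_summable \<beta>_nonneg by (simp add: summable_on_UNIV_nonneg_real_iff)
  qed auto
  have sf: "(\<lambda>(k, m). fc k m) summable_on SG"
    using abs_summable_summable[OF nsum] .
  have "zeta_AV2 s1 s2 s = infsum g PP"
    by (simp add: zeta_AV2_def g_def PP_def)
  also have "\<dots> = infsum (g \<circ> h) SG"
    using infsum_reindex[OF inj, of g] img by simp
  also have "\<dots> = infsum (\<lambda>(k, m). fc k m) SG"
    by (rule infsum_cong) (use gh in auto)
  also have "\<dots> = infsum (\<lambda>k. infsum (fc k) (S k)) UNIV"
    using infsum_Sigma'_banach[of fc UNIV S] sf by (simp add: SG_def)
  also have "(\<lambda>k. infsum (fc k) (S k)) = (\<lambda>k. A k / of_nat k powr s)"
    using S_finite by (auto simp: fc_def A_def sum_divide_distrib)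
  finally have z: "zeta_AV2 s1 s2 s = infsum (\<lambda>k. A k / of_nat k powr s) UNIV" .
  have ns: "summable (\<lambda>k. norm (A k / of_nat k powr s))"
  proof (rule summable_comparison_test'[where g=\<beta> and N=0])
    show "summable \<beta>" by (rule \<beta>_summable)
    fix n :: nat
    show "norm (norm (A n / of_nat n powr s)) \<le> \<beta> n"
      using norm_term_le[OF assms, of n] by simp
  qed
  have sm: "(\<lambda>k. A k / of_nat k powr s) sums (\<Sum>k. A k / of_nat k powr s)"
    by (rule summable_sums[OF summable_norm_cancel[OF ns]])
  have "((\<lambda>k. A k / of_nat k powr s) has_sum (\<Sum>k. A k / of_nat k powr s)) UNIV"
    by (rule norm_summable_imp_has_sum[OF ns sm])
  then have eq: "infsum (\<lambda>k. A k / of_nat k powr s) UNIV = (\<Sum>k. A k / of_nat k powr s)"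
    by (rule infsumI)
  show ?thesis using sm unfolding z eq .
qed

end


lemma exp_integral:
  fixes u T :: real assumes T: "2 \<le> T"
  shows "((\<lambda>t. exp (\<i> * of_real u * of_real t)) has_integral
     (if u = 0 then of_real (T - 2)
      else (exp (\<i> * of_real u * of_real T) - exp (\<i> * of_real u * 2)) / (\<i> * of_real u))) {2..T}"
proof (cases "u = 0")
  case True
  then show ?thesis using has_integral_const_real[of "1::complex" 2 T] T
    by (simp add: scaleR_conv_of_real)
next
  case False
  define f where "f = (\<lambda>z::complex. exp (\<i> * of_real u * z) / (\<i> * of_real u))"
  have d: "((\<lambda>x. f (of_real x)) has_vector_derivative exp (\<i> * of_real u * of_real x)) (at x within {2..T})" for x
  proof -
    have "(f has_field_derivative exp (\<i> * of_real u * of_real x)) (at (of_real x))"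
      unfolding f_def using False
      by (auto intro!: derivative_eq_intros)
    from has_vector_derivative_real_field[OF this]
    show ?thesis by (rule has_vector_derivative_at_within)
  qed
  have "((\<lambda>t. exp (\<i> * of_real u * of_real t)) has_integral f (of_real T) - f (of_real 2)) {2..T}"
    by (rule fundamental_theorem_of_calculus[OF T d])
  then show ?thesis using False by (simp add: f_def diff_divide_distrib)
qed

lemma exp_integral_bound:
  fixes u T :: real assumes "u \<noteq> 0"
  shows "norm ((exp (\<i> * of_real u * of_real T) - exp (\<i> * of_real u * 2)) / (\<i> * of_real u)) \<le> 2 / \<bar>u\<bar>"
proof -
  have "norm (exp (\<i> * of_real u * of_real T) - exp (\<i> * of_real u * 2)) \<le>
        norm (exp (\<i> * of_real u * of_real T)) + norm (exp (\<i> * of_real u * 2))"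
    by (rule norm_triangle_ineq4)
  also have "\<dots> = 2" by (simp add: norm_exp_eq_Re)
  finally show ?thesis using assms by (simp add: norm_divide norm_mult divide_right_mono)
qed


context AV begin

definition c :: "nat \<Rightarrow> complex" where "c k = A k * of_real (real k powr (- \<sigma>3))"
definition L :: "nat \<Rightarrow> real" where "L k = ln (real k)"
definition F :: "nat \<Rightarrow> real \<Rightarrow> complex" where
  "F N t = (\<Sum>k<N. c k * exp (- (\<i> * of_real (L k) * of_real t)))"

lemma term_eq: "A k / of_nat k powr (Complex \<sigma>3 t) = c k * exp (- (\<i> * of_real (L k) * of_real t))"
proof (cases "k = 0")
  case True then show ?thesis by (simp add: c_def)
next
  case False
  have "of_nat k powr (Complex \<sigma>3 t) = exp (Complex \<sigma>3 t * Ln (of_nat k))"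
    using False by (simp add: powr_def)
  also have "Ln (of_nat k) = of_real (L k)" using False by (simp add: Ln_of_nat L_def)
  also have "Complex \<sigma>3 t * of_real (L k) = of_real (\<sigma>3 * L k) + \<i> * of_real (L k) * of_real t"
    by (simp add: Complex_eq algebra_simps)
  also have "exp (of_real (\<sigma>3 * L k) + \<i> * of_real (L k) * of_real t)
      = of_real (real k powr \<sigma>3) * exp (\<i> * of_real (L k) * of_real t)"
    using False by (simp add: exp_add powr_def L_def mult_ac flip: exp_of_real)
  finally show ?thesis using False
    by (simp add: c_def powr_minus exp_minus divide_inverse mult_ac)
qed

lemma norm_c_le: "cmod (c k) \<le> \<beta> k"
  unfolding c_def \<beta>_def by (simp add: norm_mult) (intro mult_right_mono norm_A_le; simp)

lemma c_zero: "c 0 = 0" by (simp add: c_def)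

lemma F_sq_expand:
  "complex_of_real ((cmod (F N t))^2) =
     (\<Sum>k<N. \<Sum>l<N. c k * cnj (c l) * exp (\<i> * of_real (L l - L k) * of_real t))"
proof -
  have "complex_of_real ((cmod (F N t))^2) = F N t * cnj (F N t)" by (rule complex_norm_square)
  also have "\<dots> = (\<Sum>k<N. \<Sum>l<N. (c k * exp (- (\<i> * of_real (L k) * of_real t))) *
                        cnj (c l * exp (- (\<i> * of_real (L l) * of_real t))))"
    by (simp add: F_def sum_product cnj_sum)
  also have "\<dots> = (\<Sum>k<N. \<Sum>l<N. c k * cnj (c l) * exp (\<i> * of_real (L l - L k) * of_real t))"
  proof (intro sum.cong refl)
    fix k l
    have "exp (- (\<i> * of_real (L k) * of_real t)) * cnj (exp (- (\<i> * of_real (L l) * of_real t)))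
        = exp (\<i> * of_real (L l - L k) * of_real t)"
      by (simp add: exp_cnj flip: exp_add) (simp add: algebra_simps)
    then show "(c k * exp (- (\<i> * of_real (L k) * of_real t))) *
                        cnj (c l * exp (- (\<i> * of_real (L l) * of_real t)))
           = c k * cnj (c l) * exp (\<i> * of_real (L l - L k) * of_real t)"
      by (simp add: mult_ac)
  qed
  finally show ?thesis .
qed

definition I :: "real \<Rightarrow> real \<Rightarrow> complex" where
  "I u T = (if u = 0 then of_real (T - 2)
      else (exp (\<i> * of_real u * of_real T) - exp (\<i> * of_real u * 2)) / (\<i> * of_real u))"

lemma F_sq_integral:
  assumes "2 \<le> T"
  shows "((\<lambda>t. complex_of_real ((cmod (F N t))^2)) has_integral
      (\<Sum>k<N. \<Sum>l<N. c k * cnj (c l) * I (L l - L k) T)) {2..T}"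
  unfolding F_sq_expand
  unfolding I_def
  by (intro has_integral_sum has_integral_mult_right finite_lessThan exp_integral[OF assms])

end


lemma key_ineq:
  fixes a b d :: real assumes a: "a > 0" and b: "b > 0" and d: "d > 0"
  shows "a powr (-1-d) * (a+b) powr (-1-d) * ((a+b)/b) \<le> a powr (-1 - 3*d/2) * b powr (-1 - d/2)"
proof -
  have ab: "a + b > 0" using a b by simp
  have ex: "-1-d+1 = -d/2 + -d/2" by simp
  have e0: "(a+b) powr (-d/2) * (a+b) powr (-d/2) = (a+b) powr (-1-d) * (a+b) powr 1"
    by (simp only: powr_add[symmetric] ex)
  have e1: "(a+b) powr (-1-d) * (a+b) = (a+b) powr (-d/2) * (a+b) powr (-d/2)"
    by (simp only: e0 powr_one[OF less_imp_le[OF ab]])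
  have m1: "(a+b) powr (-d/2) \<le> a powr (-d/2)" using a b d by (intro powr_mono2') auto
  have m2: "(a+b) powr (-d/2) \<le> b powr (-d/2)" using a b d by (intro powr_mono2') auto
  have "a powr (-1-d) * (a+b) powr (-1-d) * ((a+b)/b) =
        a powr (-1-d) * ((a+b) powr (-1-d) * (a+b)) / b"
    by (simp only: times_divide_eq_right mult.assoc)
  also have "\<dots> = a powr (-1-d) * ((a+b) powr (-d/2) * (a+b) powr (-d/2)) / b"
    by (simp only: e1)
  also have "\<dots> \<le> a powr (-1-d) * (a powr (-d/2) * b powr (-d/2)) / b"
    using b by (intro divide_right_mono mult_left_mono mult_mono m1 m2) auto
  also have "\<dots> = (a powr (-1-d) * a powr (-d/2)) * (b powr (-d/2) / b)"
    by (simp only: times_divide_eq_right mult.assoc)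
  also have "a powr (-1-d) * a powr (-d/2) = a powr (-1 - 3*d/2)"
  proof -
    have "(-1-d) + (-d/2) = -1 - 3*d/2" by simp
    then show ?thesis by (simp only: powr_add[symmetric])
  qed
  also have "b powr (-d/2) / b = b powr (-1 - d/2)"
  proof -
    have "b powr (-1 - d/2) = b powr (-d/2 - 1)" by (rule arg_cong[where f="(powr) b"]) simp
    also have "\<dots> = b powr (-d/2) / b powr 1" by (rule powr_diff)
    also have "\<dots> = b powr (-d/2) / b" using b by simp
    finally show ?thesis by simp
  qed
  finally show ?thesis .
qed

context AV begin

definition W :: "nat \<Rightarrow> nat \<Rightarrow> real" where
  "W k l = (if k = 0 \<or> l = 0 then 0 else 2 * \<beta> k * \<beta> l / \<bar>L l - L k\<bar>)"

lemma W_nonneg: "W k l \<ge> 0" unfolding W_def using \<beta>_nonneg by auto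
lemma W_sym: "W k l = W l k" unfolding W_def by (auto simp: abs_minus_commute mult_ac)

lemma X_bound:
  assumes "k \<noteq> l"
  shows "norm (c k * cnj (c l) * I (L l - L k) T) \<le> W k l"
proof (cases "k = 0 \<or> l = 0")
  case True then show ?thesis by (auto simp: c_zero W_def)
next
  case False
  have u: "L l - L k \<noteq> 0" using False assms by (simp add: L_def)
  have "norm (c k * cnj (c l) * I (L l - L k) T) = cmod (c k) * cmod (c l) * norm (I (L l - L k) T)"
    by (simp add: norm_mult)
  also have "\<dots> \<le> \<beta> k * \<beta> l * (2 / \<bar>L l - L k\<bar>)"
  proof (intro mult_mono norm_c_le)
    show "norm (I (L l - L k) T) \<le> 2 / \<bar>L l - L k\<bar>"
      using exp_integral_bound[OF u, of T] u unfolding I_def by simp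
  qed (auto intro: \<beta>_nonneg mult_nonneg_nonneg)
  finally show ?thesis using False by (simp add: W_def mult_ac)
qed

definition "a1 = -1 - 3*\<delta>/2"
definition "a2 = -1 - \<delta>/2"
definition V :: "nat \<Rightarrow> real" where "V k = real k powr a1"
definition "Z1 = suminf V"
definition "Z2 = (\<Sum>j. real j powr a2)"
definition U :: "nat \<Rightarrow> nat \<Rightarrow> real" where
  "U k l = (if k < l then V k * real (l - k) powr a2 else 0)"

lemma V_summable: "summable V"
  unfolding V_def a1_def using \<delta>_pos by (subst summable_real_powr_iff) auto
lemma Z2_summable: "summable (\<lambda>j. real j powr a2)"
  unfolding a2_def using \<delta>_pos by (subst summable_real_powr_iff) auto
lemma V_nonneg: "V k \<ge> 0" by (simp add: V_def)
lemma U_nonneg: "U k l \<ge> 0" by (simp add: U_def V_def)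
lemma Z1_nonneg: "Z1 \<ge> 0" unfolding Z1_def by (rule suminf_nonneg[OF V_summable V_nonneg])
lemma Z2_nonneg: "Z2 \<ge> 0" unfolding Z2_def by (rule suminf_nonneg[OF Z2_summable]) simp

lemma W_le_U:
  assumes "k < l"
  shows "W k l \<le> 2 * C^2 * U k l"
proof (cases "k = 0")
  case True then show ?thesis by (simp add: W_def U_def V_def)
next
  case False
  define a where "a = real k"
  define b where "b = real (l - k)"
  have a: "a > 0" using False by (simp add: a_def)
  have b: "b > 0" using assms by (simp add: b_def)
  have lab: "real l = a + b" using assms by (simp add: a_def b_def)
  have lnb: "L l - L k \<ge> b / (a + b)"
  proof -
    have "ln (a / (a+b)) \<le> a / (a+b) - 1" using a b by (intro ln_le_minus_one) auto
    then have "ln a - ln (a+b) \<le> a / (a+b) - 1" using a b by (simp add: ln_div)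
    moreover have "a / (a+b) - 1 = - (b / (a+b))" using a b by (simp add: field_simps)
    ultimately show ?thesis by (simp add: L_def a_def lab)
  qed
  have pos: "b / (a + b) > 0" using a b by simp
  have pos2: "L l - L k > 0" using pos lnb by linarith
  have "W k l = 2 * \<beta> k * \<beta> l / (L l - L k)"
    using False assms lnb pos by (simp add: W_def)
  also have "\<dots> \<le> 2 * \<beta> k * \<beta> l / (b / (a + b))"
    using lnb pos pos2 \<beta>_nonneg by (intro divide_left_mono mult_nonneg_nonneg mult_pos_pos) auto
  also have "\<dots> = 2 * (\<beta> k * \<beta> l) * ((a + b) / b)" by simp
  also have "\<dots> \<le> 2 * ((C * a powr (-1-\<delta>)) * (C * (a+b) powr (-1-\<delta>))) * ((a + b) / b)"
    using a b \<beta>_bound[of k] \<beta>_bound[of l] \<beta>_nonneg C_nonneg unfolding a_def[symmetric] lab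
    by (intro mult_left_mono mult_right_mono mult_mono) auto
  also have "\<dots> = 2 * C^2 * (a powr (-1-\<delta>) * (a+b) powr (-1-\<delta>) * ((a + b) / b))"
    by (simp add: power2_eq_square mult_ac)
  also have "\<dots> \<le> 2 * C^2 * (a powr (-1 - 3*\<delta>/2) * b powr (-1 - \<delta>/2))"
    by (intro mult_left_mono key_ineq a b \<delta>_pos) auto
  also have "\<dots> = 2 * C^2 * U k l"
    using assms by (simp add: U_def V_def a1_def a2_def a_def b_def)
  finally show ?thesis .
qed

lemma W_le_UU:
  assumes "k \<noteq> l"
  shows "W k l \<le> 2 * C^2 * (U k l + U l k)"
proof (cases "k < l")
  case True
  have "0 \<le> 2 * C^2 * U l k" using U_nonneg[of l k] by simp
  then show ?thesis using W_le_U[OF True] unfolding distrib_left by linarith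
next
  case False
  then have "l < k" using assms by simp
  have "0 \<le> 2 * C^2 * U k l" using U_nonneg[of k l] by simp
  then show ?thesis using W_le_U[of l k] W_sym[of k l] \<open>l < k\<close> unfolding distrib_left by linarith
qed

lemma U_row: "(\<Sum>l<N. U k l) \<le> V k * Z2"
proof -
  have "(\<Sum>l<N. U k l) = (\<Sum>l\<in>{..<N} \<inter> {k<..}. V k * real (l - k) powr a2)"
    by (simp only: U_def sum.inter_restrict[OF finite_lessThan] greaterThan_iff)
  also have "\<dots> = V k * (\<Sum>l\<in>{..<N} \<inter> {k<..}. real (l - k) powr a2)"
    by (simp add: sum_distrib_left)
  also have "\<dots> \<le> V k * Z2"
    unfolding Z2_def
    by (intro mult_left_mono V_nonneg sum_inj_le_suminf Z2_summable)
       (auto simp: inj_on_def)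
  finally show ?thesis .
qed

definition "M = 4 * C^2 * Z1 * Z2"

lemma offdiag_sum: "(\<Sum>k<N. \<Sum>l\<in>{..<N}-{k}. W k l) \<le> M"
proof -
  have "(\<Sum>k<N. \<Sum>l<N. U k l) \<le> (\<Sum>k<N. V k * Z2)"
    by (intro sum_mono U_row)
  also have "\<dots> = (\<Sum>k<N. V k) * Z2" by (simp add: sum_distrib_right)
  also have "\<dots> \<le> Z1 * Z2"
    unfolding Z1_def
    by (intro mult_right_mono Z2_nonneg sum_le_suminf V_summable) (auto intro: V_nonneg)
  finally have Ut: "(\<Sum>k<N. \<Sum>l<N. U k l) \<le> Z1 * Z2" .
  have sw: "(\<Sum>k<N. \<Sum>l<N. U l k) = (\<Sum>k<N. \<Sum>l<N. U k l)"
    by (rule sum.swap)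
  have "(\<Sum>k<N. \<Sum>l\<in>{..<N}-{k}. W k l) \<le> (\<Sum>k<N. \<Sum>l\<in>{..<N}-{k}. 2 * C^2 * (U k l + U l k))"
    by (intro sum_mono W_le_UU) auto
  also have "\<dots> \<le> (\<Sum>k<N. \<Sum>l<N. 2 * C^2 * (U k l + U l k))"
    by (intro sum_mono sum_mono2) (auto intro!: mult_nonneg_nonneg add_nonneg_nonneg U_nonneg)
  also have "\<dots> = 2 * C^2 * ((\<Sum>k<N. \<Sum>l<N. U k l) + (\<Sum>k<N. \<Sum>l<N. U l k))"
    by (simp add: sum_distrib_left sum.distrib distrib_left)
  also have "\<dots> = 4 * C^2 * (\<Sum>k<N. \<Sum>l<N. U k l)"
    unfolding sw by simp
  also have "\<dots> \<le> 4 * C^2 * (Z1 * Z2)"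
    by (intro mult_left_mono Ut) auto
  finally show ?thesis
    by (simp add: M_def mult_ac)
qed

end


lemma sq_diff_bound:
  fixes z w :: complex and B :: real
  assumes "cmod z \<le> B" "cmod w \<le> B"
  shows "\<bar>(cmod z)^2 - (cmod w)^2\<bar> \<le> 2 * B * cmod (z - w)"
proof -
  have e: "(cmod z)^2 - (cmod w)^2 = (cmod z - cmod w) * (cmod z + cmod w)"
    by (simp add: power2_eq_square algebra_simps)
  have "\<bar>(cmod z)^2 - (cmod w)^2\<bar> = \<bar>cmod z - cmod w\<bar> * (cmod z + cmod w)"
    unfolding e abs_mult by simp
  also have "\<dots> \<le> cmod (z - w) * (2 * B)"
    using assms by (intro mult_mono norm_triangle_ineq3) auto
  finally show ?thesis by (simp add: mult_ac)
qed

context AV begin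

lemma finite_mean:
  assumes T: "2 \<le> T"
  shows "\<bar>integral {2..T} (\<lambda>t. (cmod (F N t))^2) - (T - 2) * (\<Sum>k<N. (cmod (c k))^2)\<bar> \<le> M"
proof -
  define X where "X k l = c k * cnj (c l) * I (L l - L k) T" for k l
  have hi: "((\<lambda>t. complex_of_real ((cmod (F N t))^2)) has_integral (\<Sum>k<N. \<Sum>l<N. X k l)) {2..T}"
    using F_sq_integral[OF T] by (simp add: X_def)
  have "((\<lambda>t. (cmod (F N t))^2) has_integral Re (\<Sum>k<N. \<Sum>l<N. X k l)) {2..T}"
    using has_integral_linear[OF hi bounded_linear_Re] by (simp add: o_def)
  then have int_eq: "integral {2..T} (\<lambda>t. (cmod (F N t))^2) = Re (\<Sum>k<N. \<Sum>l<N. X k l)"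
    by (rule integral_unique)
  have rm: "(\<Sum>l<N. X k l) = X k k + (\<Sum>l\<in>{..<N}-{k}. X k l)" if "k \<in> {..<N}" for k
    using that by (intro sum.remove) auto
  have split: "(\<Sum>k<N. \<Sum>l<N. X k l) = (\<Sum>k<N. X k k) + (\<Sum>k<N. \<Sum>l\<in>{..<N}-{k}. X k l)"
    by (simp only: sum.cong[OF refl rm] sum.distrib)
  have diag: "X k k = of_real ((cmod (c k))^2 * (T - 2))" for k
    by (simp add: X_def I_def complex_norm_square[symmetric])
  have "Re (\<Sum>k<N. X k k) = (T - 2) * (\<Sum>k<N. (cmod (c k))^2)"
    by (simp add: diag sum_distrib_left mult_ac)
  moreover have "\<bar>Re (\<Sum>k<N. \<Sum>l\<in>{..<N}-{k}. X k l)\<bar> \<le> M"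
  proof -
    have "\<bar>Re (\<Sum>k<N. \<Sum>l\<in>{..<N}-{k}. X k l)\<bar> \<le> cmod (\<Sum>k<N. \<Sum>l\<in>{..<N}-{k}. X k l)"
      by (rule abs_Re_le_cmod)
    also have "\<dots> \<le> (\<Sum>k<N. cmod (\<Sum>l\<in>{..<N}-{k}. X k l))" by (rule norm_sum)
    also have "\<dots> \<le> (\<Sum>k<N. \<Sum>l\<in>{..<N}-{k}. cmod (X k l))" by (intro sum_mono norm_sum)
    also have "\<dots> \<le> (\<Sum>k<N. \<Sum>l\<in>{..<N}-{k}. W k l)"
      unfolding X_def by (intro sum_mono X_bound) auto
    also have "\<dots> \<le> M" by (rule offdiag_sum)
    finally show ?thesis .
  qed
  ultimately show ?thesis unfolding int_eq split by simp
qed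

end


context AV begin

definition zt :: "real \<Rightarrow> complex" where "zt t = zeta_AV2 s1 s2 (Complex \<sigma>3 t)"
definition "B = suminf \<beta>"
definition R :: "nat \<Rightarrow> real" where "R N = suminf \<beta> - (\<Sum>k<N. \<beta> k)"
definition "Ssq = (\<Sum>k. (cmod (c k))^2)"

lemma B_nonneg: "B \<ge> 0" unfolding B_def by (rule suminf_nonneg[OF \<beta>_summable \<beta>_nonneg])

lemma ez_term: "cmod (c k * exp (- (\<i> * of_real (L k) * of_real t))) \<le> \<beta> k"
  by (simp add: norm_mult norm_exp_eq_Re norm_c_le)

lemma zt_sums: "(\<lambda>k. c k * exp (- (\<i> * of_real (L k) * of_real t))) sums zt t"
  using zeta_sums[of "Complex \<sigma>3 t"] by (simp add: term_eq zt_def)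

lemma tail_bound: "cmod (zt t - F N t) \<le> R N"
proof -
  define f where "f = (\<lambda>k. c k * exp (- (\<i> * of_real (L k) * of_real t)))"
  have zs: "f sums zt t" unfolding f_def by (rule zt_sums)
  have sf: "summable f" using zs by (rule sums_summable)
  have "zt t = (\<Sum>n. f (n + N)) + (\<Sum>k<N. f k)"
    using suminf_split_initial_segment[OF sf, of N] sums_unique[OF zs] by simp
  then have "zt t - F N t = (\<Sum>n. f (n + N))" by (simp add: F_def f_def)
  also have "cmod \<dots> \<le> (\<Sum>n. \<beta> (n + N))"
    by (rule norm_suminf_le) (use ez_term summable_ignore_initial_segment[OF \<beta>_summable] in \<open>auto simp: f_def\<close>)
  also have "(\<Sum>n. \<beta> (n + N)) = R N"
    using suminf_split_initial_segment[OF \<beta>_summable, of N] by (simp add: R_def)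
  finally show ?thesis .
qed

lemma F_bound: "cmod (F N t) \<le> B"
proof -
  have "cmod (F N t) \<le> (\<Sum>k<N. cmod (c k * exp (- (\<i> * of_real (L k) * of_real t))))"
    unfolding F_def by (rule norm_sum)
  also have "\<dots> \<le> (\<Sum>k<N. \<beta> k)" by (intro sum_mono ez_term)
  also have "\<dots> \<le> B" unfolding B_def by (intro sum_le_suminf \<beta>_summable) (auto intro: \<beta>_nonneg)
  finally show ?thesis .
qed

lemma zt_bound: "cmod (zt t) \<le> B"
  using sums_unique[OF zt_sums] norm_suminf_le[OF ez_term \<beta>_summable] by (simp add: B_def)

lemma R_lim: "R \<longlonglongrightarrow> 0"
proof -
  have "(\<lambda>N. suminf \<beta> - (\<Sum>k<N. \<beta> k)) \<longlonglongrightarrow> suminf \<beta> - suminf \<beta>"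
    by (intro tendsto_intros summable_LIMSEQ \<beta>_summable)
  moreover have "R = (\<lambda>N. suminf \<beta> - (\<Sum>k<N. \<beta> k))" by (rule ext) (simp add: R_def)
  ultimately show ?thesis by simp
qed

lemma R_nonneg: "R N \<ge> 0"
proof -
  have "(\<Sum>n. \<beta> (n + N)) = R N"
    using suminf_split_initial_segment[OF \<beta>_summable, of N] by (simp add: R_def)
  moreover have "(\<Sum>n. \<beta> (n + N)) \<ge> 0"
    by (intro suminf_nonneg summable_ignore_initial_segment \<beta>_summable \<beta>_nonneg)
  ultimately show ?thesis by simp
qed

lemma csq_summable: "summable (\<lambda>k. (cmod (c k))^2)"
proof (rule summable_comparison_test'[where g = "\<lambda>k. C * \<beta> k" and N = 0])
  show "summable (\<lambda>k. C * \<beta> k)" by (intro summable_mult \<beta>_summable)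
  fix n :: nat
  have "(cmod (c n))^2 \<le> (\<beta> n)^2" by (intro power_mono norm_c_le) auto
  also have "\<dots> = \<beta> n * \<beta> n" by (simp add: power2_eq_square)
  also have "\<dots> \<le> C * \<beta> n" by (intro mult_right_mono \<beta>_le_C \<beta>_nonneg)
  finally show "norm ((cmod (c n))^2) \<le> C * \<beta> n" by simp
qed

lemma Fsq_cont: "continuous_on UNIV (\<lambda>t. (cmod (F N t))^2)"
  unfolding F_def by (intro continuous_intros)

lemma Fsq_integrable: "(\<lambda>t. (cmod (F N t))^2) integrable_on {a..b}"
  by (intro integrable_continuous_interval continuous_on_subset[OF Fsq_cont]) auto

lemma pointwise_close: "\<bar>(cmod (zt t))^2 - (cmod (F N t))^2\<bar> \<le> 2 * B * R N"
proof -
  have "\<bar>(cmod (zt t))^2 - (cmod (F N t))^2\<bar> \<le> 2 * B * cmod (zt t - F N t)"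
    by (intro sq_diff_bound zt_bound F_bound)
  also have "\<dots> \<le> 2 * B * R N"
    using B_nonneg by (intro mult_left_mono tail_bound) auto
  finally show ?thesis .
qed

lemma zt_integrable: "(\<lambda>t. (cmod (zt t))^2) integrable_on {a..b}"
proof -
  have "(\<lambda>t. (cmod (zt t))^2) integrable_on cbox a b"
  proof (rule integrable_uniform_limit)
    fix e :: real assume e: "e > 0"
    have "0 < e / (2 * B + 1)" using e B_nonneg by simp
    from LIMSEQ_D[OF R_lim this] obtain N where N: "norm (R N - 0) < e / (2 * B + 1)" by auto
    have "2 * B * R N \<le> e"
    proof -
      have "2 * B * R N \<le> (2 * B + 1) * \<bar>R N\<bar>"
        using B_nonneg R_nonneg[of N] by (intro mult_mono) auto
      also have "\<dots> \<le> (2 * B + 1) * (e / (2 * B + 1))"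
        using N B_nonneg by (intro mult_left_mono) auto
      also have "\<dots> = e" using B_nonneg by simp
      finally show ?thesis .
    qed
    then show "\<exists>g. (\<forall>x\<in>cbox a b. norm ((cmod (zt x))^2 - g x) \<le> e) \<and> g integrable_on cbox a b"
      using pointwise_close Fsq_integrable
      by (intro exI[of _ "\<lambda>t. (cmod (F N t))^2"]) (auto intro: order.trans)
  qed
  then show ?thesis by simp
qed

lemma int_close:
  assumes T: "2 \<le> T"
  shows "\<bar>integral {2..T} (\<lambda>t. (cmod (zt t))^2) - integral {2..T} (\<lambda>t. (cmod (F N t))^2)\<bar>
           \<le> 2 * B * R N * (T - 2)"
proof -
  have "((\<lambda>t. (cmod (zt t))^2 - (cmod (F N t))^2) has_integral
        (integral {2..T} (\<lambda>t. (cmod (zt t))^2) - integral {2..T} (\<lambda>t. (cmod (F N t))^2))) (cbox 2 T)"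
    using has_integral_diff[OF integrable_integral[OF zt_integrable] integrable_integral[OF Fsq_integrable]]
    by simp
  from has_integral_bound[OF _ this, of "2 * B * R N"] B_nonneg R_nonneg[of N]
  have "norm (integral {2..T} (\<lambda>t. (cmod (zt t))^2) - integral {2..T} (\<lambda>t. (cmod (F N t))^2))
      \<le> 2 * B * R N * Henstock_Kurzweil_Integration.content (cbox 2 T)"
    using pointwise_close order.trans[OF abs_ge_zero pointwise_close] by auto
  then show ?thesis using T by simp
qed

end


context AV begin

lemma mean_bound:
  assumes T: "2 \<le> T"
  shows "\<bar>integral {2..T} (\<lambda>t. (cmod (zt t))^2) - (T - 2) * Ssq\<bar> \<le> M"
proof -
  define \<Phi> where "\<Phi> = integral {2..T} (\<lambda>t. (cmod (zt t))^2)"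
  define SN where "SN N = (\<Sum>k<N. (cmod (c k))^2)" for N
  define r where "r N = 2 * B * R N * (T - 2) + M + (T - 2) * \<bar>SN N - Ssq\<bar>" for N
  have each: "\<bar>\<Phi> - (T - 2) * Ssq\<bar> \<le> r N" for N
  proof -
    have a: "\<bar>\<Phi> - integral {2..T} (\<lambda>t. (cmod (F N t))^2)\<bar> \<le> 2 * B * R N * (T - 2)"
      unfolding \<Phi>_def by (rule int_close[OF T])
    have b: "\<bar>integral {2..T} (\<lambda>t. (cmod (F N t))^2) - (T - 2) * SN N\<bar> \<le> M"
      unfolding SN_def by (rule finite_mean[OF T])
    have c: "\<bar>(T - 2) * SN N - (T - 2) * Ssq\<bar> = (T - 2) * \<bar>SN N - Ssq\<bar>"
      using T by (simp add: right_diff_distrib[symmetric] abs_mult)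
    show ?thesis using a b c unfolding r_def abs_le_iff by linarith
  qed
  have lim: "r \<longlonglongrightarrow> 2 * B * 0 * (T - 2) + M + (T - 2) * \<bar>Ssq - Ssq\<bar>"
  proof -
    have "SN \<longlonglongrightarrow> Ssq"
    proof -
      have "SN = (\<lambda>N. \<Sum>k<N. (cmod (c k))^2)" by (rule ext) (simp add: SN_def)
      then show ?thesis unfolding Ssq_def using summable_LIMSEQ[OF csq_summable] by simp
    qed
    then show ?thesis
    proof -
      assume S: "SN \<longlonglongrightarrow> Ssq"
      have "(\<lambda>N. 2 * B * R N * (T - 2) + M + (T - 2) * \<bar>SN N - Ssq\<bar>) \<longlonglongrightarrow>
              2 * B * 0 * (T - 2) + M + (T - 2) * \<bar>Ssq - Ssq\<bar>"
        by (intro tendsto_intros R_lim S)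
      moreover have "r = (\<lambda>N. 2 * B * R N * (T - 2) + M + (T - 2) * \<bar>SN N - Ssq\<bar>)"
        by (rule ext) (simp add: r_def)
      ultimately show ?thesis by simp
    qed
  qed
  have "\<bar>\<Phi> - (T - 2) * Ssq\<bar> \<le> 2 * B * 0 * (T - 2) + M + (T - 2) * \<bar>Ssq - Ssq\<bar>"
    by (rule LIMSEQ_le_const[OF lim]) (use each in auto)
  then show ?thesis by (simp add: \<Phi>_def)
qed

lemma sq_eq: "zeta_AV2_sq s1 s2 (complex_of_real (2 * \<sigma>3)) = complex_of_real Ssq"
proof -
  define g where "g k = (cmod (c k))^2" for k
  have tm: "complex_of_real ((cmod (\<Sum>m\<in>{m::nat. real k / 2 < real m \<and> m \<le> k - 1}.
              1 / (of_nat m powr s1 * of_nat (k - m) powr s2)))^2) / of_nat k powr complex_of_real (2 * \<sigma>3)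
        = complex_of_real (g k)" for k
  proof (cases "k = 0")
    case True then show ?thesis by (simp add: g_def c_zero)
  next
    case False
    have sA: "(\<Sum>m\<in>{m::nat. real k / 2 < real m \<and> m \<le> k - 1}.
              1 / (of_nat m powr s1 * of_nat (k - m) powr s2)) = A k"
      by (simp add: A_def S_def)
    have pk: "(of_nat k :: complex) powr complex_of_real (2 * \<sigma>3) = complex_of_real (real k powr (2 * \<sigma>3))"
      using powr_of_real[of "real k" "2 * \<sigma>3"] by simp
    have sq: "(real k powr (- \<sigma>3))^2 = inverse (real k powr (2 * \<sigma>3))"
    proof -
      have "(real k powr (- \<sigma>3))^2 = real k powr (- \<sigma>3) * real k powr (- \<sigma>3)"
        by (simp add: power2_eq_square)
      also have "\<dots> = real k powr (- \<sigma>3 + - \<sigma>3)" by (simp only: powr_add)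
      also have "- \<sigma>3 + - \<sigma>3 = - (2 * \<sigma>3)" by simp
      also have "real k powr (- (2 * \<sigma>3)) = inverse (real k powr (2 * \<sigma>3))" by (rule powr_minus)
      finally show ?thesis .
    qed
    have "g k = (cmod (A k))^2 * (real k powr (- \<sigma>3))^2"
      by (simp add: g_def c_def norm_mult power_mult_distrib)
    then have "g k = (cmod (A k))^2 / real k powr (2 * \<sigma>3)"
      by (simp add: sq divide_inverse)
    then show ?thesis unfolding sA pk by (simp only: of_real_divide)
  qed
  have g0: "g 0 = 0" "g 1 = 0" by (simp_all add: g_def c_def A_def S_small)
  have gnn: "g k \<ge> 0" for k by (simp add: g_def)
  have sg: "summable g"
  proof -
    have "g = (\<lambda>k. (cmod (c k))^2)" by (rule ext) (simp add: g_def)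
    then show ?thesis using csq_summable by simp
  qed
  have "(\<lambda>k. norm (complex_of_real (g k))) = g"
    by (rule ext) (simp only: norm_of_real abs_of_nonneg[OF gnn])
  then have ns: "summable (\<lambda>k. norm (complex_of_real (g k)))" using sg by simp
  have sm: "(\<lambda>k. complex_of_real (g k)) sums complex_of_real Ssq"
    unfolding sums_of_real_iff Ssq_def g_def by (rule summable_sums[OF csq_summable])
  have hs: "((\<lambda>k. complex_of_real (g k)) has_sum complex_of_real Ssq) UNIV"
    by (rule norm_summable_imp_has_sum[OF ns sm])
  have "zeta_AV2_sq s1 s2 (complex_of_real (2 * \<sigma>3)) = infsum (\<lambda>k. complex_of_real (g k)) {2..}"
    unfolding zeta_AV2_sq_def using tm by simp
  also have "\<dots> = infsum (\<lambda>k. complex_of_real (g k)) UNIV"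
  proof (rule infsum_cong_neutral)
    fix x :: nat assume "x \<in> UNIV - {2..}"
    then have "x = 0 \<or> x = 1" by auto
    then show "complex_of_real (g x) = 0" using g0 by auto
  qed auto
  also have "\<dots> = complex_of_real Ssq" using hs by (rule infsumI)
  finally show ?thesis .
qed

end

theorem theorem1p1:
  fixes s1 s2 :: complex and \<sigma>3 :: real
  assumes "Re s1 + \<sigma>3 > 1" and "Re s1 + Re s2 + \<sigma>3 > 2"
  shows "(\<lambda>T::real. complex_of_real
             (integral {2..T} (\<lambda>t3. (cmod (zeta_AV2 s1 s2 (Complex \<sigma>3 t3)))^2))
           - zeta_AV2_sq s1 s2 (complex_of_real (2 * \<sigma>3)) * complex_of_real T)
         \<in> O[at_top](\<lambda>_. 1)"
proof -
  interpret AV s1 s2 \<sigma>3 using assms by unfold_locales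
  have ev: "eventually (\<lambda>T. norm (complex_of_real
             (integral {2..T} (\<lambda>t3. (cmod (zeta_AV2 s1 s2 (Complex \<sigma>3 t3)))^2))
           - zeta_AV2_sq s1 s2 (complex_of_real (2 * \<sigma>3)) * complex_of_real T)
        \<le> (M + 2 * \<bar>Ssq\<bar>) * norm (1::complex)) at_top"
    using eventually_ge_at_top[of "2::real"]
  proof eventually_elim
    case (elim T)
    define \<Phi> where "\<Phi> = integral {2..T} (\<lambda>t. (cmod (zt t))^2)"
    have mb: "\<bar>\<Phi> - (T - 2) * Ssq\<bar> \<le> M" unfolding \<Phi>_def by (rule mean_bound[OF elim])
    have "norm (complex_of_real
             (integral {2..T} (\<lambda>t3. (cmod (zeta_AV2 s1 s2 (Complex \<sigma>3 t3)))^2))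
           - zeta_AV2_sq s1 s2 (complex_of_real (2 * \<sigma>3)) * complex_of_real T)
        = \<bar>\<Phi> - Ssq * T\<bar>"
      unfolding sq_eq \<Phi>_def zt_def
      by (simp flip: of_real_mult of_real_diff)
    also have "\<dots> \<le> M + 2 * \<bar>Ssq\<bar>"
      using mb unfolding abs_le_iff by (auto simp: algebra_simps abs_if split: if_splits)
    finally show ?case by simp
  qed
  then show ?thesis by (rule bigoI)
qed


end
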